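(* Let $\mathbb{V}=(V,S)$ be a finite hypergraph with intersection graph $\mathbb{I}=(S,E)$, let $\mathbb{G}$ be an $E$-group compatible with $\mathbb{I}$, and let $\hat{\mathbb{V}}=(\hat V,\hat S)$ and $\pi$ be as defined in the context. Then $\pi:\hat V\to V$ is well defined and maps every hyperedge $[s,g]\in\hat S$ bijectively onto $s$. Moreover, if $N\ge3$ and $\mathbb{G}$ is $N$-acyclic over $\mathbb{I}$, then (a) the Gaifman graph of $\hat{\mathbb{V}}$ has no chordless cycle of length $n$ with $4\le n\le N$, and (b) every set of at most $N$ vertices of $\hat V$ that are pairwise adjacent in the Gaifman graph is contained in a single hyperedge of $\hat S$; i.e. every induced sub-hypergraph of $\hat{\mathbb{V}}$ on at most $N$ vertices is acyclic (chordal and conformal).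
   Context: A finite hypergraph $(V,S)$ has finite vertex set $V$ and set of hyperedges $S\subseteq\mathcal{P}(V)$. Its intersection graph has vertex set $S$ and edge set $E=\{\{s,s'\}: s\neq s',\ s\cap s'\neq\emptyset\}$, regarded as the $E$-graph $\mathbb{I}=(S,(R_e)_{e\in E})$ with $R_e=\{(s,s'),(s',s)\}$ for $e=\{s,s'\}$. An $E$-group is a group $\mathbb{G}$ with $E\subseteq\mathbb{G}$ generating it and each $e\in E$ satisfying $e\neq1$, $e^2=1$; $[e_1\cdots e_n]_{\mathbb{G}}=e_1\cdots e_n$. For an $E$-graph $(X,(R_e))$ (each $R_e$ symmetric, each vertex with at most one $R_e$-neighbour), $\pi_e$ swaps $R_e$-neighbours and fixes all other vertices, $\pi_{e_1\cdots e_n}=\pi_{e_n}\circ\cdots\circ\pi_{e_1}$; $\mathbb{G}$ is compatible with it if $[w]_{\mathbb{G}}=1$ implies $\pi_w=\mathrm{id}$. For $\alpha\subseteq E$, $s,t\in S$, $\alpha^*[\mathbb{I},s]$ is the set of $w=e_1\cdots e_n\in\alpha^*$ labelling a walk in $\mathbb{I}$ from $s$, $\alpha^*[\mathbb{I},s,t]$ those ending at $t$; $C[\mathbb{I},\alpha,s;g]=\{g[w]_{\mathbb{G}}:w\in\alpha^*[\mathbb{I},s]\}$. An $\mathbb{I}$-coset cycle of length $n\ge2$ is $(g_i,\alpha_i,s_i)_{i\in\mathbb{Z}_n}$, $\alpha_i\subsetneq E$, $s_i\in S$, with $g_{i+1}=g_i[w]_{\mathbb{G}}$ for some $w\in\alpha_i^*[\mathbb{I},s_i,s_{i+1}]$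 and $C[\mathbb{I},\alpha_i\cap\alpha_{i-1},s_i;g_i]\cap C[\mathbb{I},\alpha_i\cap\alpha_{i+1},s_{i+1};g_{i+1}]=\emptyset$; $\mathbb{G}$ is $N$-acyclic over $\mathbb{I}$ if there is no $\mathbb{I}$-coset cycle of length $2,\dots,N$. Covering: let $X=\{(v,s,g): s\in S,\ v\in s,\ g\in\mathbb{G}\}$ and let $\approx$ be the equivalence relation on $X$ generated by $(v,s,g)\approx(v,s',ge)$ for all $e=\{s,s'\}\in E$ with $v\in s\cap s'$. Put $\hat V=X/{\approx}$, $[s,g]=\{[(v,s,g)]: v\in s\}$, $\hat S=\{[s,g]: s\in S, g\in\mathbb{G}\}$, $\hat{\mathbb{V}}=(\hat V,\hat S)$ and $\pi([(v,s,g)])=v$. The Gaifman graph of a hypergraph joins two distinct vertices iff they lie in a common hyperedge; a chordless cycle of length $n$ is a sequence of $n$ distinct vertices in which consecutive ones (cyclically) are adjacent and no non-consecutive ones are adjacent. *)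

theory Defs
  imports "HOL-Algebra.Generated_Groups"
begin

definition inter_edges :: "'v set set \<Rightarrow> 'v set set set" where
  "inter_edges S = {{s, s'} | s s'. s \<in> S \<and> s' \<in> S \<and> s \<noteq> s' \<and> s \<inter> s' \<noteq> {}}"

text \<open>E is identified with a subset of the group via the injective map emb.\<close>
definition E_group :: "('g, 'b) monoid_scheme \<Rightarrow> 'e set \<Rightarrow> ('e \<Rightarrow> 'g) \<Rightarrow> bool" where
  "E_group G E emb \<longleftrightarrow> group G \<and> inj_on emb E \<and> emb ` E \<subseteq> carrier G
     \<and> generate G (emb ` E) = carrier G
     \<and> (\<forall>e\<in>E. emb e \<noteq> \<one>\<^bsub>G\<^esub> \<and> emb e \<otimes>\<^bsub>G\<^esub> emb e = \<one>\<^bsub>G\<^esub>)"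

definition word_val :: "('g, 'b) monoid_scheme \<Rightarrow> ('e \<Rightarrow> 'g) \<Rightarrow> 'e list \<Rightarrow> 'g" where
  "word_val G emb w = foldr (\<lambda>e a. emb e \<otimes>\<^bsub>G\<^esub> a) w \<one>\<^bsub>G\<^esub>"

definition swap_edge :: "'a set \<Rightarrow> 'a \<Rightarrow> 'a" where
  "swap_edge e x = (if x \<in> e then (THE y. e = {x, y}) else x)"

text \<open>pi_{e1...en} = pi_en o ... o pi_e1\<close>
definition pi_word :: "'a set list \<Rightarrow> 'a \<Rightarrow> 'a" where
  "pi_word w = fold swap_edge w"

definition compatible :: "('g, 'b) monoid_scheme \<Rightarrow> ('v set set \<Rightarrow> 'g) \<Rightarrow> 'v set set \<Rightarrow> bool" where
  "compatible G emb S \<longleftrightarrow>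
     (\<forall>w \<in> lists (inter_edges S). word_val G emb w = \<one>\<^bsub>G\<^esub> \<longrightarrow> (\<forall>s\<in>S. pi_word w s = s))"

fun is_walk :: "'a set set \<Rightarrow> 'a \<Rightarrow> 'a set list \<Rightarrow> 'a \<Rightarrow> bool" where
  "is_walk E s [] t = (s = t)"
| "is_walk E s (e # w) t = (e \<in> E \<and> s \<in> e \<and> is_walk E (swap_edge e s) w t)"

definition walk_words :: "'v set set \<Rightarrow> 'v set set set \<Rightarrow> 'v set \<Rightarrow> 'v set \<Rightarrow> 'v set set list set" where
  "walk_words S \<alpha> s t = {w \<in> lists \<alpha>. is_walk (inter_edges S) s w t}"

definition walks_from :: "'v set set \<Rightarrow> 'v set set set \<Rightarrow> 'v set \<Rightarrow> 'v set set list set" where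
  "walks_from S \<alpha> s = {w \<in> lists \<alpha>. \<exists>t. is_walk (inter_edges S) s w t}"

definition coset_I :: "('g, 'b) monoid_scheme \<Rightarrow> ('v set set \<Rightarrow> 'g) \<Rightarrow> 'v set set
    \<Rightarrow> 'v set set set \<Rightarrow> 'v set \<Rightarrow> 'g \<Rightarrow> 'g set" where
  "coset_I G emb S \<alpha> s g = {g \<otimes>\<^bsub>G\<^esub> word_val G emb w | w. w \<in> walks_from S \<alpha> s}"

definition coset_cycle :: "('g, 'b) monoid_scheme \<Rightarrow> ('v set set \<Rightarrow> 'g) \<Rightarrow> 'v set set \<Rightarrow> nat
    \<Rightarrow> (nat \<Rightarrow> 'g) \<Rightarrow> (nat \<Rightarrow> 'v set set set) \<Rightarrow> (nat \<Rightarrow> 'v set) \<Rightarrow> bool" where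
  "coset_cycle G emb S n g \<alpha> s \<longleftrightarrow> 2 \<le> n \<and>
     (\<forall>i<n. \<alpha> i \<subset> inter_edges S \<and> s i \<in> S \<and> g i \<in> carrier G
       \<and> (\<exists>w \<in> walk_words S (\<alpha> i) (s i) (s (Suc i mod n)).
             g (Suc i mod n) = g i \<otimes>\<^bsub>G\<^esub> word_val G emb w)
       \<and> coset_I G emb S (\<alpha> i \<inter> \<alpha> ((i + n - 1) mod n)) (s i) (g i)
         \<inter> coset_I G emb S (\<alpha> i \<inter> \<alpha> (Suc i mod n)) (s (Suc i mod n)) (g (Suc i mod n)) = {})"

definition N_acyclic :: "('g, 'b) monoid_scheme \<Rightarrow> ('v set set \<Rightarrow> 'g) \<Rightarrow> 'v set set \<Rightarrow> nat \<Rightarrow> bool" where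
  "N_acyclic G emb S N \<longleftrightarrow> \<not> (\<exists>n g \<alpha> s. n \<le> N \<and> coset_cycle G emb S n g \<alpha> s)"

definition cov_X :: "('g, 'b) monoid_scheme \<Rightarrow> 'v set set \<Rightarrow> ('v \<times> 'v set \<times> 'g) set" where
  "cov_X G S = {(v, s, g). s \<in> S \<and> v \<in> s \<and> g \<in> carrier G}"

definition cov_step :: "('g, 'b) monoid_scheme \<Rightarrow> ('v set set \<Rightarrow> 'g) \<Rightarrow> 'v set set
    \<Rightarrow> (('v \<times> 'v set \<times> 'g) \<times> ('v \<times> 'v set \<times> 'g)) set" where
  "cov_step G emb S = {((v, s, g), (v, s', g \<otimes>\<^bsub>G\<^esub> emb e)) | v s s' g e.
      e \<in> inter_edges S \<and> e = {s, s'} \<and> v \<in> s \<inter> s' \<and> g \<in> carrier G}"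

definition cov_rel :: "('g, 'b) monoid_scheme \<Rightarrow> ('v set set \<Rightarrow> 'g) \<Rightarrow> 'v set set
    \<Rightarrow> (('v \<times> 'v set \<times> 'g) \<times> ('v \<times> 'v set \<times> 'g)) set" where
  "cov_rel G emb S = Id_on (cov_X G S) \<union> (cov_step G emb S \<union> (cov_step G emb S)\<inverse>)\<^sup>+"

definition cov_V :: "('g, 'b) monoid_scheme \<Rightarrow> ('v set set \<Rightarrow> 'g) \<Rightarrow> 'v set set
    \<Rightarrow> ('v \<times> 'v set \<times> 'g) set set" where
  "cov_V G emb S = cov_X G S // cov_rel G emb S"

definition cov_edge :: "('g, 'b) monoid_scheme \<Rightarrow> ('v set set \<Rightarrow> 'g) \<Rightarrow> 'v set set
    \<Rightarrow> 'v set \<Rightarrow> 'g \<Rightarrow> ('v \<times> 'v set \<times> 'g) set set" where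
  "cov_edge G emb S s g = {cov_rel G emb S `` {(v, s, g)} | v. v \<in> s}"

definition cov_S :: "('g, 'b) monoid_scheme \<Rightarrow> ('v set set \<Rightarrow> 'g) \<Rightarrow> 'v set set
    \<Rightarrow> ('v \<times> 'v set \<times> 'g) set set set" where
  "cov_S G emb S = {cov_edge G emb S s g | s g. s \<in> S \<and> g \<in> carrier G}"

text \<open>pi([(v,s,g)]) = v (well defined, as shown in the theorem).\<close>
definition cov_pi :: "('v \<times> 'v set \<times> 'g) set \<Rightarrow> 'v" where
  "cov_pi c = fst (SOME x. x \<in> c)"

definition gaif_adj :: "'a set set \<Rightarrow> 'a \<Rightarrow> 'a \<Rightarrow> bool" where
  "gaif_adj H x y \<longleftrightarrow> x \<noteq> y \<and> (\<exists>h\<in>H. x \<in> h \<and> y \<in> h)"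

definition chordless_cycle :: "'a set \<Rightarrow> 'a set set \<Rightarrow> 'a list \<Rightarrow> bool" where
  "chordless_cycle W H c \<longleftrightarrow> distinct c \<and> set c \<subseteq> W \<and>
     (\<forall>i < length c. gaif_adj H (c ! i) (c ! (Suc i mod length c))) \<and>
     (\<forall>i < length c. \<forall>j < length c. i \<noteq> j \<and> j \<noteq> Suc i mod length c \<and> i \<noteq> Suc j mod length c
        \<longrightarrow> \<not> gaif_adj H (c ! i) (c ! j))"

end

theory Submission
  imports Defs
begin


lemma swap_pair: "a \<noteq> b \<Longrightarrow> swap_edge {a,b} a = b"
  unfolding swap_edge_def by (auto intro!: the_equality simp: doubleton_eq_iff)

lemma ie_elim: "e \<in> inter_edges S \<Longrightarrow> \<exists>a b. e = {a,b} \<and> a \<in> S \<and> b \<in> S \<and> a \<noteq> b \<and> a \<inter> b \<noteq> {}"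
  by (auto simp: inter_edges_def)

lemma swap_in:
  assumes "e \<in> inter_edges S" "x \<in> e"
  shows "swap_edge e x \<in> e \<and> swap_edge e x \<noteq> x \<and> e = {x, swap_edge e x} \<and> swap_edge e x \<in> S"
proof -
  obtain a b where e: "e = {a,b}" "a \<in> S" "b \<in> S" "a \<noteq> b" using ie_elim[OF assms(1)] by blast
  show ?thesis
  proof (cases "x = a")
    case True thus ?thesis using e swap_pair[of a b] by auto
  next
    case False
    hence "x = b" using assms(2) e by auto
    thus ?thesis using e swap_pair[of b a] by (auto simp: insert_commute)
  qed
qed

lemma swap_invol:
  assumes "e \<in> inter_edges S" shows "swap_edge e (swap_edge e x) = x"
proof (cases "x \<in> e")
  case True
  let ?y = "swap_edge e x"
  have 1: "?y \<in> e" "?y \<noteq> x" "e = {x, ?y}" using swap_in[OF assms True] by auto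
  have "e = {?y, x}" using 1 by auto
  thus ?thesis using swap_pair[of ?y x] 1 by metis
next
  case False thus ?thesis by (simp add: swap_edge_def)
qed

lemma walk_append: "is_walk E s (w1@w2) t \<longleftrightarrow> (\<exists>m. is_walk E s w1 m \<and> is_walk E m w2 t)"
  by (induction w1 arbitrary: s) auto

lemma walk_pi: "is_walk E s w t \<Longrightarrow> pi_word w s = t"
  unfolding pi_word_def by (induction w arbitrary: s) auto

lemma walk_lists: "is_walk E s w t \<Longrightarrow> w \<in> lists E"
  by (induction w arbitrary: s) auto

lemma walk_rev: "is_walk (inter_edges S) s w t \<Longrightarrow> is_walk (inter_edges S) t (rev w) s"
proof (induction w arbitrary: s)
  case Nil thus ?case by simp
next
  case (Cons e w)
  hence e: "e \<in> inter_edges S" "s \<in> e" and w: "is_walk (inter_edges S) (swap_edge e s) w t" by auto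
  have "is_walk (inter_edges S) t (rev w) (swap_edge e s)" using Cons.IH w by blast
  moreover have "is_walk (inter_edges S) (swap_edge e s) [e] s"
    using e swap_in[OF e] swap_invol[OF e(1)] by auto
  ultimately show ?case by (auto simp: walk_append)
qed

lemma walk_S: "is_walk (inter_edges S) s w t \<Longrightarrow> s \<in> S \<Longrightarrow> t \<in> S"
  by (induction w arbitrary: s) (auto dest: swap_in)

definition Ep :: "'v set set \<Rightarrow> 'v set \<Rightarrow> 'v set set set" where
  "Ep S P = {e \<in> inter_edges S. \<forall>x\<in>e. P \<subseteq> x}"

lemma Ep_sub: "Ep S P \<subseteq> inter_edges S" by (auto simp: Ep_def)

lemma Ep_lists: "w \<in> lists (Ep S P) \<Longrightarrow> w \<in> lists (inter_edges S)"
  using Ep_sub by blast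

lemma walk_Ep: "is_walk (inter_edges S) s w t \<Longrightarrow> w \<in> lists (Ep S P) \<Longrightarrow> P \<subseteq> s \<Longrightarrow> P \<subseteq> t"
proof (induction w arbitrary: s)
  case (Cons e w)
  hence e: "e \<in> inter_edges S" "s \<in> e" "\<forall>x\<in>e. P \<subseteq> x" by (auto simp: Ep_def)
  have "P \<subseteq> swap_edge e s" using swap_in[OF e(1,2)] e(3) by blast
  thus ?case using Cons by auto
qed simp

lemma Ep_mono: "Q \<subseteq> P \<Longrightarrow> Ep S P \<subseteq> Ep S Q" by (auto simp: Ep_def)

lemma Ep_Un: "Ep S (P \<union> Q) = Ep S P \<inter> Ep S Q" by (auto simp: Ep_def)

lemma pi_rev: "w \<in> lists (inter_edges S) \<Longrightarrow> pi_word w (pi_word (rev w) x) = x"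
  unfolding pi_word_def by (induction w arbitrary: x) (auto simp: swap_invol)



locale covl =
  fixes S :: "'v set set" and G :: "'g monoid" (structure) and emb :: "'v set set \<Rightarrow> 'g"
  assumes EG: "E_group G (inter_edges S) emb" and comp: "compatible G emb S"
begin

sublocale group G using EG unfolding E_group_def by auto

abbreviation "IE \<equiv> inter_edges S"
abbreviation "val \<equiv> word_val G emb"
abbreviation "R \<equiv> cov_rel G emb S"
abbreviation "X \<equiv> cov_X G S"
abbreviation "H \<equiv> cov_edge G emb S"

lemma emb_carr: "e \<in> IE \<Longrightarrow> emb e \<in> carrier G" using EG unfolding E_group_def by auto
lemma emb_sq: "e \<in> IE \<Longrightarrow> emb e \<otimes> emb e = \<one>" using EG unfolding E_group_def by auto

lemma val_Nil[simp]: "val [] = \<one>" by (simp add: word_val_def)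
lemma val_Cons: "val (e#w) = emb e \<otimes> val w" by (simp add: word_val_def)

lemma val_carr: "w \<in> lists IE \<Longrightarrow> val w \<in> carrier G"
  by (induction w) (auto simp: val_Cons emb_carr)

lemma val_append: "w1 \<in> lists IE \<Longrightarrow> w2 \<in> lists IE \<Longrightarrow> val (w1@w2) = val w1 \<otimes> val w2"
  by (induction w1) (auto simp: val_Cons m_assoc val_carr emb_carr)

lemma val_rev: "w \<in> lists IE \<Longrightarrow> val (rev w) \<otimes> val w = \<one>"
proof (induction w)
  case (Cons e w)
  hence e: "e \<in> IE" and w: "w \<in> lists IE" by auto
  have "val (rev (e#w)) \<otimes> val (e#w) = (val (rev w) \<otimes> emb e) \<otimes> (emb e \<otimes> val w)"
  proof -
    have "rev w \<in> lists IE" using w by (simp add: in_lists_conv_set)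
    thus ?thesis using e w by (simp add: val_append val_Cons emb_carr)
  qed
  also have "\<dots> = val (rev w) \<otimes> (emb e \<otimes> emb e) \<otimes> val w"
  proof -
    have "rev w \<in> lists IE" using w by (simp add: in_lists_conv_set)
    hence c: "val (rev w) \<in> carrier G" "val w \<in> carrier G" "emb e \<in> carrier G"
      using w e val_carr emb_carr by auto
    thus ?thesis by (simp only: m_assoc m_closed)
  qed
  also have "\<dots> = \<one>" using Cons e w by (simp add: emb_sq val_carr in_lists_conv_set)
  finally show ?case .
qed simp

lemma val_rev2: "w \<in> lists IE \<Longrightarrow> val w \<otimes> val (rev w) = \<one>"
  using val_rev[of "rev w"] by (simp add: in_lists_conv_set)

lemma D:
  assumes s0: "s0 \<in> S" and g0: "g0 \<in> carrier G"
    and w: "is_walk IE s0 w s1"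
    and u0: "is_walk IE s0 u0 t0"
    and u1: "is_walk IE s1 u1 t1"
    and eq: "g0 \<otimes> val u0 = (g0 \<otimes> val w) \<otimes> val u1"
  shows "t0 = t1"
proof -
  have L: "w \<in> lists IE" "u0 \<in> lists IE" "u1 \<in> lists IE" using walk_lists[OF w] walk_lists[OF u0] walk_lists[OF u1] by auto
  have L2: "rev u0 \<in> lists IE" using L by (simp add: in_lists_conv_set)
  have C: "val w \<in> carrier G" "val u0 \<in> carrier G" "val u1 \<in> carrier G" "val (rev u0) \<in> carrier G"
    using val_carr[OF L(1)] val_carr[OF L(2)] val_carr[OF L(3)] val_carr[OF L2] by auto
  have "g0 \<otimes> val u0 = g0 \<otimes> (val w \<otimes> val u1)" using eq g0 C by (simp only: m_assoc)
  hence e1: "val u0 = val w \<otimes> val u1" using g0 C by (metis Units_l_cancel Units_eq m_closed)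
  let ?z = "w @ (u1 @ rev u0)"
  have zl: "?z \<in> lists IE" "u1 @ rev u0 \<in> lists IE" using L L2 by auto
  have "val ?z = val w \<otimes> (val u1 \<otimes> val (rev u0))"
    using L L2 zl by (simp only: val_append)
  also have "\<dots> = (val w \<otimes> val u1) \<otimes> val (rev u0)" using C by (simp only: m_assoc)
  also have "\<dots> = \<one>" using e1 val_rev2[OF L(2)] by simp
  finally have vz: "val ?z = \<one>" .
  have "pi_word ?z s0 = s0" using comp zl(1) s0 vz unfolding compatible_def by blast
  moreover have "pi_word ?z s0 = pi_word (rev u0) (pi_word u1 (pi_word w s0))"
    unfolding pi_word_def by simp
  moreover have "pi_word w s0 = s1" "pi_word u1 s1 = t1" using walk_pi[OF w] walk_pi[OF u1] by auto
  ultimately have "pi_word (rev u0) t1 = s0" by metis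
  hence "t1 = pi_word u0 s0" using pi_rev[OF L(2)] by metis
  thus ?thesis using walk_pi[OF u0] by simp
qed

definition Q where
  "Q = {((v,s,g),(v',t,g')). v' = v \<and> s \<in> S \<and> v \<in> s \<and> g \<in> carrier G \<and>
     (\<exists>w\<in>lists (Ep S {v}). is_walk IE s w t \<and> g' = g \<otimes> val w)}"

lemma Q_X: "Q \<subseteq> X \<times> X"
proof safe
  fix v s g v' t g' assume "((v,s,g),(v',t,g')) \<in> Q"
  then obtain w where h: "v' = v" "s \<in> S" "v \<in> s" "g \<in> carrier G" "w \<in> lists (Ep S {v})"
    "is_walk IE s w t" "g' = g \<otimes> val w" unfolding Q_def by auto
  show "(v,s,g) \<in> X" using h by (simp add: cov_X_def)
  have "v \<in> t" using walk_Ep[OF h(6) h(5)] h by auto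
  moreover have "t \<in> S" using walk_S h by blast
  moreover have "g' \<in> carrier G"
  proof -
    have "w \<in> lists IE" using Ep_lists h(5) by blast
    thus ?thesis using h(4,7) val_carr by auto
  qed
  ultimately show "(v',t,g') \<in> X" using h by (simp add: cov_X_def)
qed

lemma Q_trans: "trans Q"
proof (rule transI)
  fix x y z assume xy: "(x,y) \<in> Q" and yz: "(y,z) \<in> Q"
  obtain v s g where x: "x = (v,s,g)" by (cases x) auto
  obtain v1 t g1 where y: "y = (v1,t,g1)" by (cases y) auto
  obtain v2 u g2 where z: "z = (v2,u,g2)" by (cases z) auto
  obtain w where h: "v1 = v" "s \<in> S" "v \<in> s" "g \<in> carrier G" "w \<in> lists (Ep S {v})"
    "is_walk IE s w t" "g1 = g \<otimes> val w" using xy unfolding Q_def x y by auto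
  obtain w' where h': "v2 = v1" "w' \<in> lists (Ep S {v1})"
    "is_walk IE t w' u" "g2 = g1 \<otimes> val w'" using yz unfolding Q_def y z by auto
  have wl: "w \<in> lists IE" "w' \<in> lists IE" using Ep_lists h(5) h'(2) h'(1) by blast+
  have "g2 = g \<otimes> val (w @ w')"
    using h(4,7) h'(4) val_append[OF wl] val_carr[OF wl(1)] val_carr[OF wl(2)] by (simp add: m_assoc)
  moreover have "is_walk IE s (w@w') u" using h(6) h'(3) unfolding walk_append by blast
  moreover have "w @ w' \<in> lists (Ep S {v})" using h h' by auto
  ultimately show "(x,z) \<in> Q" unfolding x z Q_def using h h' by blast
qed

lemma Q_sym: "sym Q"
proof (rule symI)
  fix x y assume xy: "(x,y) \<in> Q"
  obtain v s g where x: "x = (v,s,g)" by (cases x) auto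
  obtain v1 t g1 where y: "y = (v1,t,g1)" by (cases y) auto
  obtain w where h: "v1 = v" "s \<in> S" "v \<in> s" "g \<in> carrier G" "w \<in> lists (Ep S {v})"
    "is_walk IE s w t" "g1 = g \<otimes> val w" using xy unfolding Q_def x y by auto
  have yX: "y \<in> X" using Q_X xy by blast
  have wl: "w \<in> lists IE" using h Ep_lists by blast
  have "rev w \<in> lists IE" using wl by (simp add: in_lists_conv_set)
  hence "g1 \<otimes> val (rev w) = g" using h(4,7) wl val_carr[OF wl]
    by (simp add: m_assoc val_carr val_rev2)
  moreover have "is_walk IE t (rev w) s" using walk_rev h by blast
  moreover have "rev w \<in> lists (Ep S {v})" using h by auto
  ultimately show "(y,x) \<in> Q" using yX h unfolding x y Q_def cov_X_def by auto
qed

lemma step_Q: "cov_step G emb S \<subseteq> Q"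
proof
  fix x assume "x \<in> cov_step G emb S"
  then obtain v s s' g e where x: "x = ((v, s, g), v, s', g \<otimes> emb e)" and
   h: "e \<in> IE" "e = {s,s'}" "v \<in> s" "v \<in> s'" "g \<in> carrier G"
    unfolding cov_step_def by blast
  have sS: "s \<in> S" "s' \<in> S" "s \<noteq> s'" using ie_elim[OF h(1)] h(2) by (auto simp: doubleton_eq_iff)
  have "swap_edge e s = s'" using h(2) sS swap_pair by simp
  hence "is_walk IE s [e] s'" using h by simp
  moreover have "[e] \<in> lists (Ep S {v})" using h by (auto simp: Ep_def)
  moreover have "g \<otimes> emb e = g \<otimes> val [e]" using h by (simp add: val_Cons emb_carr)
  ultimately show "x \<in> Q" unfolding Q_def x using h sS by blast
qed

lemma R_Q: "R \<subseteq> Q"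
proof -
  have "Id_on X \<subseteq> Q"
  proof safe
    fix v s g assume "(v,s,g) \<in> X"
    thus "((v,s,g),(v,s,g)) \<in> Q" unfolding Q_def cov_X_def
      by (auto intro!: bexI[of _ "[]"])
  qed
  moreover have "cov_step G emb S \<union> (cov_step G emb S)\<inverse> \<subseteq> Q"
    using step_Q Q_sym by (auto simp: sym_def)
  hence "(cov_step G emb S \<union> (cov_step G emb S)\<inverse>)\<^sup>+ \<subseteq> Q"
    using Q_trans by (metis trancl_id trancl_mono subsetI)
  ultimately show ?thesis unfolding cov_rel_def by blast
qed

lemma R_X: "R \<subseteq> X \<times> X" using R_Q Q_X by blast

lemma R_equiv: "equiv X R"
proof (rule equivI)
  show "R \<subseteq> X \<times> X" by (rule R_X)
  show "refl_on X R" unfolding refl_on_def using R_X by (auto simp: cov_rel_def)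
  have "sym (cov_step G emb S \<union> (cov_step G emb S)\<inverse>)" by (auto simp: sym_def)
  hence "sym ((cov_step G emb S \<union> (cov_step G emb S)\<inverse>)\<^sup>+)" by (rule sym_trancl)
  thus "sym R" unfolding cov_rel_def by (auto simp: sym_def)
  show "trans R"
  proof (rule transI)
    fix x y z assume "(x,y) \<in> R" "(y,z) \<in> R"
    thus "(x,z) \<in> R" unfolding cov_rel_def by (auto dest: trancl_trans)
  qed
qed

lemma Q_R: "s \<in> S \<Longrightarrow> v \<in> s \<Longrightarrow> g \<in> carrier G \<Longrightarrow> w \<in> lists (Ep S {v}) \<Longrightarrow> is_walk IE s w t
   \<Longrightarrow> ((v,s,g),(v,t,g \<otimes> val w)) \<in> R"
proof (induction w arbitrary: s g)
  case Nil thus ?case by (auto simp: cov_rel_def cov_X_def)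
next
  case (Cons e w)
  hence e: "e \<in> Ep S {v}" "e \<in> IE" "s \<in> e" and w: "w \<in> lists (Ep S {v})"
    and wk: "is_walk IE (swap_edge e s) w t" by (auto simp: Ep_def)
  let ?s' = "swap_edge e s"
  have sw: "?s' \<in> e" "e = {s, ?s'}" "?s' \<in> S" using swap_in[OF e(2,3)] by auto
  have vs': "v \<in> ?s'" using e sw by (auto simp: Ep_def)
  have ge: "g \<otimes> emb e \<in> carrier G" using Cons e emb_carr by auto
  have "((v,s,g),(v,?s',g \<otimes> emb e)) \<in> cov_step G emb S"
    unfolding cov_step_def using e sw vs' Cons.prems by blast
  hence 1: "((v,s,g),(v,?s',g \<otimes> emb e)) \<in> R" unfolding cov_rel_def by blast
  have 2: "((v,?s',g \<otimes> emb e),(v,t,(g \<otimes> emb e) \<otimes> val w)) \<in> R"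
    using Cons.IH[OF sw(3) vs' ge w wk] .
  have "(g \<otimes> emb e) \<otimes> val w = g \<otimes> val (e#w)"
  proof -
    have "w \<in> lists IE" using w Ep_lists by blast
    thus ?thesis using Cons.prems(3) e emb_carr[OF e(2)] val_carr by (simp add: val_Cons m_assoc)
  qed
  thus ?case using 1 2 R_equiv by (metis equivE transD)
qed

lemma pi_class: "x \<in> X \<Longrightarrow> cov_pi (R``{x}) = fst x"
proof -
  assume x: "x \<in> X"
  have "x \<in> R``{x}" using x by (auto simp: cov_rel_def)
  hence "(SOME y. y \<in> R``{x}) \<in> R``{x}" by (rule someI)
  hence "(x, SOME y. y \<in> R``{x}) \<in> Q" using R_Q by blast
  thus ?thesis unfolding cov_pi_def Q_def by auto
qed

lemma R_fst: "(x,y) \<in> R \<Longrightarrow> fst x = fst y" using R_Q unfolding Q_def by auto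

lemma edge_bij: "s \<in> S \<Longrightarrow> g \<in> carrier G \<Longrightarrow> bij_betw cov_pi (H s g) s"
proof -
  assume sg: "s \<in> S" "g \<in> carrier G"
  have X: "\<And>v. v \<in> s \<Longrightarrow> (v,s,g) \<in> X" using sg by (simp add: cov_X_def)
  have pc: "\<And>v. v \<in> s \<Longrightarrow> cov_pi (R``{(v,s,g)}) = v" using pi_class X by fastforce
  show ?thesis unfolding bij_betw_def inj_on_def cov_edge_def
    using pc by (auto simp: image_def) metis+
qed

end

lemma am1: "i < (n::nat) \<Longrightarrow> Suc ((i + n - 1) mod n) mod n = i"
proof -
  assume i: "i < n"
  have "Suc ((i + n - 1) mod n) mod n = Suc (i + n - 1) mod n" by (simp add: mod_Suc_eq)
  also have "Suc (i + n - 1) = i + n" using i by arith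
  finally show ?thesis using i by simp
qed
lemma am2: "i < (n::nat) \<Longrightarrow> 4 \<le> n \<Longrightarrow> i \<noteq> Suc (Suc i mod n) mod n \<and> Suc (Suc i mod n) mod n \<noteq> Suc i mod n \<and> i \<noteq> Suc (Suc (Suc i mod n) mod n) mod n"
  by (auto simp: mod_Suc)
lemma am3: "i < (3::nat) \<Longrightarrow> Suc i mod 3 < 3 \<and> (i+3-1) mod 3 < 3 \<and> Suc ((i+3-1) mod 3) mod 3 = i \<and> Suc (Suc i mod 3) mod 3 = (i+3-1) mod 3 \<and> i \<noteq> Suc i mod 3 \<and> i \<noteq> (i+3-1) mod 3 \<and> Suc i mod 3 \<noteq> (i+3-1) mod 3"
proof -
  assume "i < 3" hence "i = 0 \<or> i = 1 \<or> i = 2" by arith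
  thus ?thesis by auto
qed
lemma three: "finite A \<Longrightarrow> 3 \<le> card A \<Longrightarrow> \<exists>a b c. a \<in> A \<and> b \<in> A \<and> c \<in> A \<and> a \<noteq> b \<and> a \<noteq> c \<and> b \<noteq> c"
proof -
  assume "finite A" "3 \<le> card A"
  then obtain B where "B \<subseteq> A" "card B = 3" using obtain_subset_with_card_n by metis
  thus ?thesis unfolding card_3_iff by blast
qed


context covl begin

lemma K:
  assumes s: "s \<in> S" "g \<in> carrier G" and y: "y \<in> H s g"
    and w: "w \<in> lists (Ep S {cov_pi y})" "is_walk IE s w t"
  shows "y \<in> H t (g \<otimes> val w)"
proof -
  obtain u where u: "u \<in> s" "y = R``{(u,s,g)}" using y unfolding cov_edge_def by blast
  have uX: "(u,s,g) \<in> X" using s u by (simp add: cov_X_def)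
  have pu: "cov_pi y = u" using pi_class[OF uX] u by simp
  have r: "((u,s,g),(u,t,g \<otimes> val w)) \<in> R" using Q_R[OF s(1) u(1) s(2)] w pu by simp
  hence "y = R``{(u,t,g \<otimes> val w)}" using u R_equiv by (simp add: equiv_class_eq)
  moreover have "u \<in> t" using walk_Ep[OF w(2) w(1)] pu u by auto
  ultimately show ?thesis unfolding cov_edge_def by blast
qed

lemma Kinv:
  assumes sg: "s \<in> S" "g \<in> carrier G" "t \<in> S" "g' \<in> carrier G"
    and y: "y \<in> H s g" "y \<in> H t g'"
  shows "\<exists>w \<in> lists (Ep S {cov_pi y}). is_walk IE s w t \<and> g' = g \<otimes> val w"
proof -
  obtain u where u: "u \<in> s" "y = R``{(u,s,g)}" using y unfolding cov_edge_def by blast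
  obtain u' where u': "u' \<in> t" "y = R``{(u',t,g')}" using y unfolding cov_edge_def by blast
  have uX: "(u,s,g) \<in> X" "(u',t,g') \<in> X" using sg u u' by (auto simp: cov_X_def)
  have pu: "cov_pi y = u" using pi_class[OF uX(1)] u by simp
  have "((u,s,g),(u',t,g')) \<in> R" using eq_equiv_class_iff[OF R_equiv uX] u u' by simp
  hence "((u,s,g),(u',t,g')) \<in> Q" using R_Q by blast
  thus ?thesis unfolding Q_def using pu by auto
qed

lemma covS_E: "h \<in> cov_S G emb S \<Longrightarrow> \<exists>s g. s \<in> S \<and> g \<in> carrier G \<and> h = H s g"
  unfolding cov_S_def by blast

lemma covS_I: "s \<in> S \<Longrightarrow> g \<in> carrier G \<Longrightarrow> H s g \<in> cov_S G emb S"
  unfolding cov_S_def by blast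

lemma J:
  assumes b: "\<beta> \<subseteq> IE" and g: "g \<in> carrier G" "g' \<in> carrier G"
    and u0: "u0 \<in> lists \<beta>" "is_walk IE s u0 t"
    and u1: "u1 \<in> lists \<beta>" "is_walk IE s' u1 t"
    and eq: "g \<otimes> val u0 = g' \<otimes> val u1"
  shows "u0 @ rev u1 \<in> lists \<beta> \<and> is_walk IE s (u0 @ rev u1) s' \<and> g' = g \<otimes> val (u0 @ rev u1)"
proof -
  have L: "u0 \<in> lists IE" "u1 \<in> lists IE" "rev u1 \<in> lists IE" using u0 u1 b
    by (auto simp: in_lists_conv_set)
  have "g \<otimes> val (u0 @ rev u1) = (g \<otimes> val u0) \<otimes> val (rev u1)"
    using L g val_carr[OF L(1)] val_carr[OF L(3)] by (simp add: val_append m_assoc)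
  also have "\<dots> = g' \<otimes> (val u1 \<otimes> val (rev u1))"
    using eq g val_carr[OF L(2)] val_carr[OF L(3)] by (simp add: m_assoc)
  also have "\<dots> = g'" using val_rev2[OF L(2)] g by simp
  finally have "g' = g \<otimes> val (u0 @ rev u1)" by simp
  moreover have "is_walk IE s (u0 @ rev u1) s'" using u0 walk_rev[OF u1(2)] unfolding walk_append by blast
  moreover have "u0 @ rev u1 \<in> lists \<beta>" using u0 u1 by (auto simp: in_lists_conv_set)
  ultimately show ?thesis by blast
qed

lemma meet:
  assumes sg: "s \<in> S" "g \<in> carrier G" and b: "\<beta> \<subseteq> IE" "\<beta>' \<subseteq> IE"
    and w: "is_walk IE s w s'" "g' = g \<otimes> val w"
    and x: "x \<in> coset_I G emb S \<beta> s g" "x \<in> coset_I G emb S \<beta>' s' g'"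
  shows "\<exists>t u0 u1. u0 \<in> lists \<beta> \<and> is_walk IE s u0 t \<and> u1 \<in> lists \<beta>' \<and> is_walk IE s' u1 t
     \<and> x = g \<otimes> val u0 \<and> x = g' \<otimes> val u1 \<and> t \<in> S \<and> x \<in> carrier G"
proof -
  obtain u0 t0 where u0: "u0 \<in> lists \<beta>" "is_walk IE s u0 t0" "x = g \<otimes> val u0"
    using x(1) unfolding coset_I_def walks_from_def by blast
  obtain u1 t1 where u1: "u1 \<in> lists \<beta>'" "is_walk IE s' u1 t1" "x = g' \<otimes> val u1"
    using x(2) unfolding coset_I_def walks_from_def by blast
  have "t0 = t1" using D[OF sg w(1) u0(2) u1(2)] u0(3) u1(3) w(2) by simp
  moreover have "t0 \<in> S" using walk_S u0(2) sg by blast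
  moreover have "x \<in> carrier G"
  proof -
    have "u0 \<in> lists IE" using u0(1) b by auto
    thus ?thesis using u0(3) sg(2) val_carr by simp
  qed
  ultimately show ?thesis using u0 u1 by blast
qed

lemma Wl:
  assumes ac: "N_acyclic G emb S N" "2 \<le> N"
    and B: "finite B" "B \<noteq> {}"
    and sg: "s1 \<in> S" "g1 \<in> carrier G" "s2 \<in> S" "g2 \<in> carrier G"
    and sub: "B \<subseteq> H s1 g1" "B \<subseteq> H s2 g2"
  shows "\<exists>w \<in> lists (Ep S (cov_pi ` B)). is_walk IE s1 w s2 \<and> g2 = g1 \<otimes> val w"
  using B sub
proof (induction B rule: finite_ne_induct)
  case (singleton y) thus ?case using Kinv[OF sg] by simp
next
  case (insert z B)
  from insert obtain w where w: "w \<in> lists (Ep S (cov_pi`B))" "is_walk IE s1 w s2" "g2 = g1 \<otimes> val w"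
    by auto
  obtain w' where w': "w' \<in> lists (Ep S {cov_pi z})" "is_walk IE s1 w' s2" "g2 = g1 \<otimes> val w'"
    using Kinv[OF sg] insert.prems by auto
  have EU: "Ep S (cov_pi ` insert z B) = Ep S {cov_pi z} \<inter> Ep S (cov_pi ` B)"
    using Ep_Un[of S "{cov_pi z}" "cov_pi ` B"] by simp
  show ?case
  proof (cases "Ep S (cov_pi`B) = IE")
    case True
    hence "Ep S (cov_pi ` insert z B) = Ep S {cov_pi z}" using EU Ep_sub by blast
    thus ?thesis using w' by auto
  next
    case F1: False
    show ?thesis
    proof (cases "Ep S {cov_pi z} = IE")
      case True
      hence "Ep S (cov_pi ` insert z B) = Ep S (cov_pi ` B)" using EU Ep_sub by blast
      thus ?thesis using w by auto
    next
      case F2: False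
      show ?thesis
      proof (rule ccontr)
        assume nex: "\<not> ?thesis"
        let ?b = "Ep S (cov_pi ` insert z B)"
        define \<alpha> where "\<alpha> = (\<lambda>i::nat. if i = 0 then Ep S (cov_pi`B) else Ep S {cov_pi z})"
        define sf where "sf = (\<lambda>i::nat. if i = 0 then s1 else s2)"
        define gf where "gf = (\<lambda>i::nat. if i = 0 then g1 else g2)"
        have wl: "w \<in> lists IE" using w(1) Ep_lists by blast
        have disj: "coset_I G emb S ?b s1 g1 \<inter> coset_I G emb S ?b s2 g2 = {}"
        proof (rule ccontr)
          assume "coset_I G emb S ?b s1 g1 \<inter> coset_I G emb S ?b s2 g2 \<noteq> {}"
          then obtain x where x: "x \<in> coset_I G emb S ?b s1 g1" "x \<in> coset_I G emb S ?b s2 g2" by blast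
          obtain t u0 u1 where m: "u0 \<in> lists ?b" "is_walk IE s1 u0 t" "u1 \<in> lists ?b"
            "is_walk IE s2 u1 t" "x = g1 \<otimes> val u0" "x = g2 \<otimes> val u1"
            using meet[OF sg(1,2) Ep_sub Ep_sub w(2,3) x] by blast
          have "u0 @ rev u1 \<in> lists ?b \<and> is_walk IE s1 (u0 @ rev u1) s2 \<and> g2 = g1 \<otimes> val (u0 @ rev u1)"
            using J[OF Ep_sub sg(2) sg(4) m(1,2,3,4)] m(5,6) by simp
          thus False using nex by blast
        qed
        have rw: "rev w' \<in> lists (Ep S {cov_pi z})" "is_walk IE s2 (rev w') s1" "g1 = g2 \<otimes> val (rev w')"
        proof -
          show "rev w' \<in> lists (Ep S {cov_pi z})" using w'(1) by (simp add: in_lists_conv_set)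
          show "is_walk IE s2 (rev w') s1" using walk_rev[OF w'(2)] .
          have wl': "w' \<in> lists IE" using w'(1) Ep_lists by blast
          have "rev w' \<in> lists IE" using wl' by (simp add: in_lists_conv_set)
          thus "g1 = g2 \<otimes> val (rev w')" using w'(3) sg(2) val_carr[OF wl'] val_carr
            val_rev2[OF wl'] by (simp add: m_assoc)
        qed
        have a01: "\<alpha> 0 \<inter> \<alpha> (Suc 0) = ?b" "\<alpha> (Suc 0) \<inter> \<alpha> 0 = ?b" using EU by (auto simp: \<alpha>_def)
        have c0: "\<alpha> 0 \<subset> IE \<and> sf 0 \<in> S \<and> gf 0 \<in> carrier G
          \<and> (\<exists>w \<in> walk_words S (\<alpha> 0) (sf 0) (sf (Suc 0)). gf (Suc 0) = gf 0 \<otimes> val w)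
          \<and> coset_I G emb S (\<alpha> 0 \<inter> \<alpha> (Suc 0)) (sf 0) (gf 0) \<inter> coset_I G emb S (\<alpha> 0 \<inter> \<alpha> (Suc 0)) (sf (Suc 0)) (gf (Suc 0)) = {}"
        proof (intro conjI)
          show "\<alpha> 0 \<subset> IE" using F1 Ep_sub unfolding \<alpha>_def by (simp add: psubset_eq)
          show "sf 0 \<in> S" using sg unfolding sf_def by simp
          show "gf 0 \<in> carrier G" using sg unfolding gf_def by simp
          have "w \<in> walk_words S (\<alpha> 0) (sf 0) (sf (Suc 0))"
            unfolding walk_words_def \<alpha>_def sf_def using w by simp
          thus "\<exists>w \<in> walk_words S (\<alpha> 0) (sf 0) (sf (Suc 0)). gf (Suc 0) = gf 0 \<otimes> val w"
            using w(3) unfolding gf_def by auto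
          show "coset_I G emb S (\<alpha> 0 \<inter> \<alpha> (Suc 0)) (sf 0) (gf 0) \<inter> coset_I G emb S (\<alpha> 0 \<inter> \<alpha> (Suc 0)) (sf (Suc 0)) (gf (Suc 0)) = {}"
            unfolding a01 using disj unfolding sf_def gf_def by simp
        qed
        have c1: "\<alpha> (Suc 0) \<subset> IE \<and> sf (Suc 0) \<in> S \<and> gf (Suc 0) \<in> carrier G
          \<and> (\<exists>w \<in> walk_words S (\<alpha> (Suc 0)) (sf (Suc 0)) (sf 0). gf 0 = gf (Suc 0) \<otimes> val w)
          \<and> coset_I G emb S (\<alpha> (Suc 0) \<inter> \<alpha> 0) (sf (Suc 0)) (gf (Suc 0)) \<inter> coset_I G emb S (\<alpha> (Suc 0) \<inter> \<alpha> 0) (sf 0) (gf 0) = {}"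
        proof (intro conjI)
          show "\<alpha> (Suc 0) \<subset> IE" using F2 Ep_sub unfolding \<alpha>_def by (simp add: psubset_eq)
          show "sf (Suc 0) \<in> S" using sg unfolding sf_def by simp
          show "gf (Suc 0) \<in> carrier G" using sg unfolding gf_def by simp
          have "rev w' \<in> walk_words S (\<alpha> (Suc 0)) (sf (Suc 0)) (sf 0)"
            unfolding walk_words_def \<alpha>_def sf_def using rw by simp
          thus "\<exists>w \<in> walk_words S (\<alpha> (Suc 0)) (sf (Suc 0)) (sf 0). gf 0 = gf (Suc 0) \<otimes> val w"
            using rw(3) unfolding gf_def by auto
          show "coset_I G emb S (\<alpha> (Suc 0) \<inter> \<alpha> 0) (sf (Suc 0)) (gf (Suc 0)) \<inter> coset_I G emb S (\<alpha> (Suc 0) \<inter> \<alpha> 0) (sf 0) (gf 0) = {}"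
            unfolding a01 using disj unfolding sf_def gf_def by auto
        qed
        have "coset_cycle G emb S 2 gf \<alpha> sf"
          unfolding coset_cycle_def
          apply (rule conjI[OF order_refl])
          apply (intro allI impI)
          subgoal for i
            apply (subgoal_tac "i = 0 \<or> i = 1")
             apply (erule disjE)
              apply (simp add: c0)
             apply (simp add: c1 One_nat_def)
            apply arith
            done
          done
        thus False using ac unfolding N_acyclic_def by blast
      qed
    qed
  qed
qed

end


context covl begin

lemma no_chordless:
  assumes ac: "N_acyclic G emb S N" and c: "chordless_cycle (cov_V G emb S) (cov_S G emb S) c"
    and n: "4 \<le> length c" "length c \<le> N"
  shows False
proof -
  define n where "n = length c"
  have n4: "4 \<le> n" "n \<le> N" using n n_def by auto
  let ?HS = "cov_S G emb S"
  have adj: "\<And>i. i < n \<Longrightarrow> gaif_adj ?HS (c!i) (c!(Suc i mod n))"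
    using c unfolding chordless_cycle_def n_def by blast
  have nc: "\<And>i. i < n \<Longrightarrow> \<not> gaif_adj ?HS (c!i) (c!(Suc (Suc i mod n) mod n))"
  proof -
    fix i assume i: "i < n"
    let ?j = "Suc (Suc i mod n) mod n"
    have j: "?j < n" using n4 by simp
    have "i \<noteq> ?j \<and> ?j \<noteq> Suc i mod n \<and> i \<noteq> Suc ?j mod n" using am2[OF i n4(1)] by simp
    moreover have "\<forall>i<n. \<forall>j<n. i \<noteq> j \<and> j \<noteq> Suc i mod n \<and> i \<noteq> Suc j mod n
        \<longrightarrow> \<not> gaif_adj ?HS (c ! i) (c ! j)" using c unfolding chordless_cycle_def n_def by blast
    ultimately show "\<not> gaif_adj ?HS (c!i) (c!?j)" using i j by blast
  qed
  have dist: "\<And>i. i < n \<Longrightarrow> c!i \<noteq> c!(Suc (Suc i mod n) mod n)"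
  proof -
    fix i assume i: "i < n"
    have "i \<noteq> Suc (Suc i mod n) mod n" using am2[OF i n4(1)] by simp
    moreover have "Suc (Suc i mod n) mod n < n" using n4 by simp
    ultimately show "c!i \<noteq> c!(Suc (Suc i mod n) mod n)"
      using c i unfolding chordless_cycle_def n_def by (simp add: nth_eq_iff_index_eq)
  qed
  have "\<forall>i. \<exists>p. i < n \<longrightarrow> fst p \<in> S \<and> snd p \<in> carrier G \<and> c!i \<in> H (fst p) (snd p)
      \<and> c!(Suc i mod n) \<in> H (fst p) (snd p)"
  proof (intro allI)
    fix i show "\<exists>p. i < n \<longrightarrow> fst p \<in> S \<and> snd p \<in> carrier G \<and> c!i \<in> H (fst p) (snd p)
      \<and> c!(Suc i mod n) \<in> H (fst p) (snd p)"
    proof (cases "i < n")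
      case True
      then obtain h where "h \<in> ?HS" "c!i \<in> h" "c!(Suc i mod n) \<in> h"
        using adj unfolding gaif_adj_def by blast
      then obtain s g where "s \<in> S" "g \<in> carrier G" "c!i \<in> H s g" "c!(Suc i mod n) \<in> H s g"
        using covS_E by blast
      thus ?thesis by (intro exI[of _ "(s,g)"]) simp
    qed simp
  qed
  then have "\<exists>f. \<forall>i. i < n \<longrightarrow> fst (f i) \<in> S \<and> snd (f i) \<in> carrier G \<and> c!i \<in> H (fst (f i)) (snd (f i))
      \<and> c!(Suc i mod n) \<in> H (fst (f i)) (snd (f i))" by (rule choice)
  then obtain f where f: "\<And>i. i < n \<Longrightarrow> fst (f i) \<in> S \<and> snd (f i) \<in> carrier G \<and> c!i \<in> H (fst (f i)) (snd (f i))
      \<and> c!(Suc i mod n) \<in> H (fst (f i)) (snd (f i))" by blast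
  define sf where "sf = (\<lambda>i. fst (f i))"
  define gf where "gf = (\<lambda>i. snd (f i))"
  have F: "\<And>i. i < n \<Longrightarrow> sf i \<in> S \<and> gf i \<in> carrier G \<and> c!i \<in> H (sf i) (gf i)
      \<and> c!(Suc i mod n) \<in> H (sf i) (gf i)" using f unfolding sf_def gf_def by blast
  define \<alpha> where "\<alpha> = (\<lambda>i. Ep S {cov_pi (c!(Suc i mod n))})"
  have wk: "\<And>i. i < n \<Longrightarrow> \<exists>w \<in> lists (\<alpha> i). is_walk IE (sf i) w (sf (Suc i mod n))
      \<and> gf (Suc i mod n) = gf i \<otimes> val w"
  proof -
    fix i assume i: "i < n"
    have j: "Suc i mod n < n" using n4 by simp
    show "\<exists>w \<in> lists (\<alpha> i). is_walk IE (sf i) w (sf (Suc i mod n)) \<and> gf (Suc i mod n) = gf i \<otimes> val w"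
      using Kinv[of "sf i" "gf i" "sf (Suc i mod n)" "gf (Suc i mod n)" "c!(Suc i mod n)"]
        F[OF i] F[OF j] unfolding \<alpha>_def by blast
  qed
  have "coset_cycle G emb S n gf \<alpha> sf"
    unfolding coset_cycle_def
  proof (rule conjI)
    show "2 \<le> n" using n4 by simp
    show "\<forall>i<n. \<alpha> i \<subset> inter_edges S \<and> sf i \<in> S \<and> gf i \<in> carrier G \<and>
       (\<exists>w\<in>walk_words S (\<alpha> i) (sf i) (sf (Suc i mod n)). gf (Suc i mod n) = gf i \<otimes> word_val G emb w) \<and>
       coset_I G emb S (\<alpha> i \<inter> \<alpha> ((i + n - 1) mod n)) (sf i) (gf i) \<inter>
       coset_I G emb S (\<alpha> i \<inter> \<alpha> (Suc i mod n)) (sf (Suc i mod n)) (gf (Suc i mod n)) = {}"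
    proof (intro allI impI)
      fix i assume i: "i < n"
      define j where "j = Suc i mod n"
      define k where "k = (i + n - 1) mod n"
      have jk: "j < n" "k < n" "Suc k mod n = i" using n4 am1[OF i] unfolding j_def k_def by auto
      define j' where "j' = Suc j mod n"
      have j': "j' < n" using n4 unfolding j'_def by simp
      obtain w where w: "w \<in> lists (\<alpha> i)" "is_walk IE (sf i) w (sf j)" "gf j = gf i \<otimes> val w"
        using wk[OF i] unfolding j_def by blast
      have Fi: "sf i \<in> S" "gf i \<in> carrier G" "c!i \<in> H (sf i) (gf i)" "c!j \<in> H (sf i) (gf i)"
        using F[OF i] unfolding j_def by auto
      have Fj: "sf j \<in> S" "gf j \<in> carrier G" "c!j \<in> H (sf j) (gf j)" "c!j' \<in> H (sf j) (gf j)"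
        using F[OF jk(1)] unfolding j'_def by auto
      have prp: "\<alpha> i \<subset> IE"
      proof -
        have sub: "\<alpha> i \<subseteq> IE" unfolding \<alpha>_def using Ep_sub by blast
        have "\<alpha> i \<noteq> IE"
        proof
          assume eq: "\<alpha> i = IE"
          obtain w2 where w2: "w2 \<in> lists (\<alpha> j)" "is_walk IE (sf j) w2 (sf j')"
            "gf j' = gf j \<otimes> val w2" using wk[OF jk(1)] unfolding j'_def by blast
          have "w2 \<in> lists (Ep S {cov_pi (c!j)})"
            using w2(1) eq Ep_sub[of S] unfolding \<alpha>_def j_def by blast
          hence "c!j \<in> H (sf j') (gf j')" using K[OF Fj(1,2,3) _ w2(2)] w2(3) by simp
          moreover have "c!(Suc j' mod n) \<in> H (sf j') (gf j')" using F[OF j'] by blast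
          moreover have "H (sf j') (gf j') \<in> ?HS" using F[OF j'] covS_I by blast
          moreover have "c!j \<noteq> c!(Suc j' mod n)" using dist[OF jk(1)] unfolding j'_def by simp
          ultimately have "gaif_adj ?HS (c!j) (c!(Suc j' mod n))" unfolding gaif_adj_def by blast
          thus False using nc[OF jk(1)] unfolding j'_def by simp
        qed
        thus ?thesis using sub by blast
      qed
      have disj: "coset_I G emb S (\<alpha> i \<inter> \<alpha> k) (sf i) (gf i) \<inter>
          coset_I G emb S (\<alpha> i \<inter> \<alpha> j) (sf j) (gf j) = {}"
      proof (rule ccontr)
        assume "\<not> ?thesis"
        then obtain x where x: "x \<in> coset_I G emb S (\<alpha> i \<inter> \<alpha> k) (sf i) (gf i)"
          "x \<in> coset_I G emb S (\<alpha> i \<inter> \<alpha> j) (sf j) (gf j)" by blast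
        have bs: "\<alpha> i \<inter> \<alpha> k \<subseteq> IE" "\<alpha> i \<inter> \<alpha> j \<subseteq> IE" unfolding \<alpha>_def using Ep_sub by blast+
        obtain t u0 u1 where m: "u0 \<in> lists (\<alpha> i \<inter> \<alpha> k)" "is_walk IE (sf i) u0 t"
          "u1 \<in> lists (\<alpha> i \<inter> \<alpha> j)" "is_walk IE (sf j) u1 t" "x = gf i \<otimes> val u0"
          "x = gf j \<otimes> val u1" "t \<in> S" "x \<in> carrier G"
          using meet[OF Fi(1,2) bs w(2,3) x] by blast
        have "u0 \<in> lists (Ep S {cov_pi (c!i)})" using m(1) jk(3) unfolding \<alpha>_def by auto
        hence 1: "c!i \<in> H t x" using K[OF Fi(1,2,3) _ m(2)] m(5) by simp
        have "u1 \<in> lists (Ep S {cov_pi (c!j')})" using m(3) unfolding \<alpha>_def j'_def by auto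
        hence 2: "c!j' \<in> H t x" using K[OF Fj(1,2,4) _ m(4)] m(6) by simp
        have "H t x \<in> ?HS" using m(7,8) covS_I by blast
        moreover have "c!i \<noteq> c!j'" using dist[OF i] unfolding j'_def j_def by simp
        ultimately have "gaif_adj ?HS (c!i) (c!j')" using 1 2 unfolding gaif_adj_def by blast
        thus False using nc[OF i] unfolding j'_def j_def by simp
      qed
      have "w \<in> walk_words S (\<alpha> i) (sf i) (sf j)" unfolding walk_words_def using w by simp
      hence ex: "\<exists>w\<in>walk_words S (\<alpha> i) (sf i) (sf j). gf j = gf i \<otimes> val w" using w(3) by blast
      thus "\<alpha> i \<subset> inter_edges S \<and> sf i \<in> S \<and> gf i \<in> carrier G \<and>
       (\<exists>w\<in>walk_words S (\<alpha> i) (sf i) (sf (Suc i mod n)). gf (Suc i mod n) = gf i \<otimes> word_val G emb w) \<and>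
       coset_I G emb S (\<alpha> i \<inter> \<alpha> ((i + n - 1) mod n)) (sf i) (gf i) \<inter>
       coset_I G emb S (\<alpha> i \<inter> \<alpha> (Suc i mod n)) (sf (Suc i mod n)) (gf (Suc i mod n)) = {}"
        unfolding j_def[symmetric] k_def[symmetric] using prp Fi(1,2) disj ex by blast
    qed
  qed
  thus False using ac n4 unfolding N_acyclic_def by blast
qed

end


context covl begin

lemma clique_step:
  assumes ac: "N_acyclic G emb S N" "3 \<le> N"
    and A: "finite A" "3 \<le> card A"
    and cov: "\<And>a. a \<in> A \<Longrightarrow> \<exists>h\<in>cov_S G emb S. A - {a} \<subseteq> h"
  shows "\<exists>h\<in>cov_S G emb S. A \<subseteq> h"
proof (rule ccontr)
  assume ncov: "\<not> ?thesis"
  let ?HS = "cov_S G emb S"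
  obtain a0 a1 a2 where a: "a0 \<in> A" "a1 \<in> A" "a2 \<in> A" "a0 \<noteq> a1" "a0 \<noteq> a2" "a1 \<noteq> a2"
    using three[OF A] by blast
  define xf where "xf = (\<lambda>i::nat. if i = 0 then a0 else if i = 1 then a1 else a2)"
  have xA: "\<And>i. xf i \<in> A" unfolding xf_def using a by auto
  have xinj: "\<And>i j. i < 3 \<Longrightarrow> j < 3 \<Longrightarrow> i \<noteq> j \<Longrightarrow> xf i \<noteq> xf j"
  proof -
    fix i j :: nat assume "i < 3" "j < 3" "i \<noteq> j"
    hence "(i = 0 \<or> i = 1 \<or> i = 2) \<and> (j = 0 \<or> j = 1 \<or> j = 2)" by arith
    thus "xf i \<noteq> xf j" using \<open>i \<noteq> j\<close> a unfolding xf_def by auto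
  qed
  have "\<forall>i. \<exists>p. fst p \<in> S \<and> snd p \<in> carrier G \<and> A - {xf i} \<subseteq> H (fst p) (snd p)"
  proof
    fix i
    obtain h where "h \<in> ?HS" "A - {xf i} \<subseteq> h" using cov[OF xA[of i]] by blast
    then obtain s g where "s \<in> S" "g \<in> carrier G" "A - {xf i} \<subseteq> H s g" using covS_E by blast
    thus "\<exists>p. fst p \<in> S \<and> snd p \<in> carrier G \<and> A - {xf i} \<subseteq> H (fst p) (snd p)"
      by (intro exI[of _ "(s,g)"]) simp
  qed
  then have "\<exists>f. \<forall>i. fst (f i) \<in> S \<and> snd (f i) \<in> carrier G \<and> A - {xf i} \<subseteq> H (fst (f i)) (snd (f i))"
    by (rule choice)
  then obtain f where f: "\<And>i. fst (f i) \<in> S \<and> snd (f i) \<in> carrier G \<and> A - {xf i} \<subseteq> H (fst (f i)) (snd (f i))"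
    by blast
  define sf where "sf = (\<lambda>i. fst (f i))"
  define gf where "gf = (\<lambda>i. snd (f i))"
  have F: "\<And>i. sf i \<in> S" "\<And>i. gf i \<in> carrier G" "\<And>i. A - {xf i} \<subseteq> H (sf i) (gf i)"
    using f unfolding sf_def gf_def by auto
  have notin: "\<And>i. \<not> A \<subseteq> H (sf i) (gf i)"
  proof
    fix i assume "A \<subseteq> H (sf i) (gf i)"
    thus False using ncov covS_I[OF F(1)[of i] F(2)[of i]] by blast
  qed
  define B where "B = (\<lambda>i. A - {xf i, xf (Suc i mod 3)})"
  define \<alpha> where "\<alpha> = (\<lambda>i. Ep S (cov_pi ` B i))"
  have BH: "\<And>i. B i \<subseteq> H (sf i) (gf i)" "\<And>i. B i \<subseteq> H (sf (Suc i mod 3)) (gf (Suc i mod 3))"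
  proof -
    fix i show "B i \<subseteq> H (sf i) (gf i)" using F(3)[of i] unfolding B_def by blast
  next
    fix i show "B i \<subseteq> H (sf (Suc i mod 3)) (gf (Suc i mod 3))" using F(3)[of "Suc i mod 3"] unfolding B_def by blast
  qed
  have Bfin: "\<And>i. finite (B i)" using A unfolding B_def by simp
  have Bne: "\<And>i. i < 3 \<Longrightarrow> xf ((i+3-1) mod 3) \<in> B i"
  proof -
    fix i :: nat assume i: "i < 3"
    note m = am3[OF i]
    have "xf ((i+3-1) mod 3) \<noteq> xf i" by (rule xinj) (use m i in auto)
    moreover have "xf ((i+3-1) mod 3) \<noteq> xf (Suc i mod 3)" by (rule xinj) (use m in auto)
    ultimately show "xf ((i+3-1) mod 3) \<in> B i" unfolding B_def using xA by blast
  qed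
  have wk: "\<And>i. i < 3 \<Longrightarrow> \<exists>w \<in> lists (\<alpha> i). is_walk IE (sf i) w (sf (Suc i mod 3))
      \<and> gf (Suc i mod 3) = gf i \<otimes> val w"
  proof -
    fix i :: nat assume i: "i < 3"
    show "\<exists>w \<in> lists (\<alpha> i). is_walk IE (sf i) w (sf (Suc i mod 3)) \<and> gf (Suc i mod 3) = gf i \<otimes> val w"
      unfolding \<alpha>_def
    proof (rule Wl[OF ac(1) _ Bfin[of i] _ F(1)[of i] F(2)[of i] F(1)[of "Suc i mod 3"] F(2)[of "Suc i mod 3"]
        BH(1)[of i] BH(2)[of i]])
      show "2 \<le> N" using ac(2) by simp
      show "B i \<noteq> {}" using Bne[OF i] by blast
    qed
  qed
  have "coset_cycle G emb S 3 gf \<alpha> sf"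
    unfolding coset_cycle_def
  proof (rule conjI)
    show "2 \<le> (3::nat)" by simp
    show "\<forall>i<3. \<alpha> i \<subset> inter_edges S \<and> sf i \<in> S \<and> gf i \<in> carrier G \<and>
       (\<exists>w\<in>walk_words S (\<alpha> i) (sf i) (sf (Suc i mod 3)). gf (Suc i mod 3) = gf i \<otimes> word_val G emb w) \<and>
       coset_I G emb S (\<alpha> i \<inter> \<alpha> ((i + 3 - 1) mod 3)) (sf i) (gf i) \<inter>
       coset_I G emb S (\<alpha> i \<inter> \<alpha> (Suc i mod 3)) (sf (Suc i mod 3)) (gf (Suc i mod 3)) = {}"
    proof (intro allI impI)
      fix i :: nat assume i: "i < 3"
      define j where "j = Suc i mod 3"
      define k where "k = (i + 3 - 1) mod 3"
      have jk: "j < 3" "k < 3" "Suc k mod 3 = i" "Suc j mod 3 = k" "i \<noteq> j" "i \<noteq> k" "j \<noteq> k"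
        using am3[OF i] unfolding j_def k_def by auto
      have Bk: "B k = A - {xf k, xf i}" unfolding B_def jk(3) ..
      have Bi: "B i = A - {xf i, xf j}" unfolding B_def j_def ..
      have Bj: "B j = A - {xf j, xf k}" unfolding B_def jk(4) ..
      have Bunion: "B k \<union> B i \<union> B j = A"
        using xinj[OF i jk(1) jk(5)] xinj[OF i jk(2) jk(6)] xinj[OF jk(1) jk(2) jk(7)]
        unfolding Bk Bi Bj by blast
      obtain w where w: "w \<in> lists (\<alpha> i)" "is_walk IE (sf i) w (sf j)" "gf j = gf i \<otimes> val w"
        using wk[OF i] unfolding j_def by blast
      have prp: "\<alpha> i \<subset> IE"
      proof -
        have sub: "\<alpha> i \<subseteq> IE" unfolding \<alpha>_def using Ep_sub by blast
        have "\<alpha> i \<noteq> IE"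
        proof
          assume eq: "\<alpha> i = IE"
          obtain w2 where w2: "w2 \<in> lists (\<alpha> j)" "is_walk IE (sf j) w2 (sf k)"
            "gf k = gf j \<otimes> val w2" using wk[OF jk(1)] unfolding jk(4) by blast
          have "B i \<subseteq> H (sf k) (gf k)"
          proof
            fix y assume y: "y \<in> B i"
            have "\<alpha> i \<subseteq> Ep S {cov_pi y}" unfolding \<alpha>_def using y by (intro Ep_mono) auto
            hence "w2 \<in> lists (Ep S {cov_pi y})" using w2(1) eq Ep_sub[of S] unfolding \<alpha>_def by blast
            moreover have "y \<in> H (sf j) (gf j)" using BH(2)[of i] y unfolding j_def by blast
            ultimately show "y \<in> H (sf k) (gf k)" using K[OF F(1)[of j] F(2)[of j] _ _ w2(2)] w2(3) by simp
          qed
          moreover have "xf k \<in> B i" using Bne[OF i] unfolding k_def .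
          ultimately have "A \<subseteq> H (sf k) (gf k)" using F(3)[of k] by blast
          thus False using notin by blast
        qed
        thus ?thesis using sub by blast
      qed
      have disj: "coset_I G emb S (\<alpha> i \<inter> \<alpha> k) (sf i) (gf i) \<inter>
          coset_I G emb S (\<alpha> i \<inter> \<alpha> j) (sf j) (gf j) = {}"
      proof (rule ccontr)
        assume "\<not> ?thesis"
        then obtain x where x: "x \<in> coset_I G emb S (\<alpha> i \<inter> \<alpha> k) (sf i) (gf i)"
          "x \<in> coset_I G emb S (\<alpha> i \<inter> \<alpha> j) (sf j) (gf j)" by blast
        have bs: "\<alpha> i \<inter> \<alpha> k \<subseteq> IE" "\<alpha> i \<inter> \<alpha> j \<subseteq> IE" unfolding \<alpha>_def using Ep_sub by blast+
        obtain t u0 u1 where m: "u0 \<in> lists (\<alpha> i \<inter> \<alpha> k)" "is_walk IE (sf i) u0 t"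
          "u1 \<in> lists (\<alpha> i \<inter> \<alpha> j)" "is_walk IE (sf j) u1 t" "x = gf i \<otimes> val u0"
          "x = gf j \<otimes> val u1" "t \<in> S" "x \<in> carrier G"
          using meet[OF F(1)[of i] F(2)[of i] bs w(2,3) x] by blast
        have "B k \<union> B i \<subseteq> H t x"
        proof
          fix y assume y: "y \<in> B k \<union> B i"
          have "\<alpha> i \<inter> \<alpha> k \<subseteq> Ep S {cov_pi y}" unfolding \<alpha>_def Ep_Un[symmetric]
            using y by (intro Ep_mono) auto
          hence "u0 \<in> lists (Ep S {cov_pi y})" using m(1) by blast
          moreover have "y \<in> H (sf i) (gf i)" using y BH(1)[of i] BH(2)[of k] unfolding jk(3) by blast
          ultimately show "y \<in> H t x" using K[OF F(1)[of i] F(2)[of i] _ _ m(2)] m(5) by simp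
        qed
        moreover have "B i \<union> B j \<subseteq> H t x"
        proof
          fix y assume y: "y \<in> B i \<union> B j"
          have "\<alpha> i \<inter> \<alpha> j \<subseteq> Ep S {cov_pi y}" unfolding \<alpha>_def Ep_Un[symmetric]
            using y by (intro Ep_mono) auto
          hence "u1 \<in> lists (Ep S {cov_pi y})" using m(3) by blast
          moreover have "y \<in> H (sf j) (gf j)" using y BH(1)[of j] BH(2)[of i] unfolding j_def by blast
          ultimately show "y \<in> H t x" using K[OF F(1)[of j] F(2)[of j] _ _ m(4)] m(6) by simp
        qed
        ultimately have "A \<subseteq> H t x" using Bunion by blast
        thus False using ncov covS_I[OF m(7,8)] by blast
      qed
      have "w \<in> walk_words S (\<alpha> i) (sf i) (sf j)" unfolding walk_words_def using w by simp
      hence ex: "\<exists>w\<in>walk_words S (\<alpha> i) (sf i) (sf j). gf j = gf i \<otimes> val w" using w(3) by blast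
      show "\<alpha> i \<subset> inter_edges S \<and> sf i \<in> S \<and> gf i \<in> carrier G \<and>
       (\<exists>w\<in>walk_words S (\<alpha> i) (sf i) (sf (Suc i mod 3)). gf (Suc i mod 3) = gf i \<otimes> word_val G emb w) \<and>
       coset_I G emb S (\<alpha> i \<inter> \<alpha> ((i + 3 - 1) mod 3)) (sf i) (gf i) \<inter>
       coset_I G emb S (\<alpha> i \<inter> \<alpha> (Suc i mod 3)) (sf (Suc i mod 3)) (gf (Suc i mod 3)) = {}"
        unfolding j_def[symmetric] k_def[symmetric] using prp F(1)[of i] F(2)[of i] disj ex by blast
    qed
  qed
  thus False using ac unfolding N_acyclic_def by blast
qed

end


context covl begin

lemma cliques:
  assumes ac: "N_acyclic G emb S N" "3 \<le> N"
  shows "A \<subseteq> cov_V G emb S \<Longrightarrow> finite A \<Longrightarrow> A \<noteq> {} \<Longrightarrow> card A \<le> N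
    \<Longrightarrow> (\<forall>x\<in>A. \<forall>y\<in>A. x \<noteq> y \<longrightarrow> gaif_adj (cov_S G emb S) x y)
    \<Longrightarrow> \<exists>h\<in>cov_S G emb S. A \<subseteq> h"
proof (induction "card A" arbitrary: A rule: less_induct)
  case less
  have c0: "card A \<noteq> 0" using less.prems by simp
  show ?case
  proof (cases "card A = 1")
    case True
    then obtain a where A: "A = {a}" by (rule card_1_singletonE)
    have "a \<in> X // R" using less.prems(1) A unfolding cov_V_def by blast
    then obtain x where x: "a = R``{x}" "x \<in> X" by (rule quotientE)
    then obtain v s g where vsg: "x = (v,s,g)" "s \<in> S" "v \<in> s" "g \<in> carrier G"
      unfolding cov_X_def by blast
    have "a \<in> H s g" using x vsg unfolding cov_edge_def by blast
    moreover have "H s g \<in> cov_S G emb S" using vsg covS_I by blast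
    ultimately show ?thesis using A by blast
  next
    case F1: False
    show ?thesis
    proof (cases "card A = 2")
      case True
      then obtain a b where ab: "A = {a,b}" "a \<noteq> b" by (auto simp: card_2_iff)
      hence "gaif_adj (cov_S G emb S) a b" using less.prems(5) by blast
      thus ?thesis using ab unfolding gaif_adj_def by auto
    next
      case False
      hence c3: "3 \<le> card A" using c0 F1 by arith
      show ?thesis
      proof (rule clique_step[OF ac less.prems(2) c3])
        fix a assume a: "a \<in> A"
        have cd: "card (A - {a}) = card A - 1" using a less.prems(2) by simp
        show "\<exists>h\<in>cov_S G emb S. A - {a} \<subseteq> h"
        proof (rule less.hyps)
          show "card (A - {a}) < card A" using cd c3 by simp
          show "A - {a} \<subseteq> cov_V G emb S" using less.prems(1) by blast
          show "finite (A - {a})" using less.prems(2) by simp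
          show "A - {a} \<noteq> {}"
          proof
            assume e: "A - {a} = {}" hence "card (A - {a}) = 0" by (simp only: card.empty)
            thus False using cd c3 by simp
          qed
          show "card (A - {a}) \<le> N" using cd less.prems(4) by simp
          show "\<forall>x\<in>A - {a}. \<forall>y\<in>A - {a}. x \<noteq> y \<longrightarrow> gaif_adj (cov_S G emb S) x y"
            using less.prems(5) by blast
        qed
      qed
    qed
  qed
qed

end

theorem mainTheorem12:
  fixes V :: "'v set" and S :: "'v set set" and G :: "'g monoid"
    and emb :: "'v set set \<Rightarrow> 'g" and N :: nat
  assumes "finite V" and "S \<subseteq> Pow V"
    and "E_group G (inter_edges S) emb"
    and "compatible G emb S"
  shows "(\<forall>x y. (x, y) \<in> cov_rel G emb S \<longrightarrow> fst x = fst y)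
    \<and> (\<forall>s\<in>S. \<forall>g\<in>carrier G. bij_betw cov_pi (cov_edge G emb S s g) s)
    \<and> (3 \<le> N \<and> N_acyclic G emb S N \<longrightarrow>
         (\<forall>c. chordless_cycle (cov_V G emb S) (cov_S G emb S) c \<and> 4 \<le> length c \<and> length c \<le> N
              \<longrightarrow> False)
       \<and> (\<forall>A. A \<subseteq> cov_V G emb S \<and> finite A \<and> A \<noteq> {} \<and> card A \<le> N
              \<and> (\<forall>x\<in>A. \<forall>y\<in>A. x \<noteq> y \<longrightarrow> gaif_adj (cov_S G emb S) x y)
              \<longrightarrow> (\<exists>h\<in>cov_S G emb S. A \<subseteq> h)))"
proof -
  interpret covl S G emb by (rule covl.intro[OF assms(3,4)])
  have P1: "\<forall>x y. (x, y) \<in> cov_rel G emb S \<longrightarrow> fst x = fst y" using R_fst by blast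
  have P2: "\<forall>s\<in>S. \<forall>g\<in>carrier G. bij_betw cov_pi (cov_edge G emb S s g) s" using edge_bij by blast
  have P3: "3 \<le> N \<and> N_acyclic G emb S N \<longrightarrow>
         (\<forall>c. chordless_cycle (cov_V G emb S) (cov_S G emb S) c \<and> 4 \<le> length c \<and> length c \<le> N
              \<longrightarrow> False)
       \<and> (\<forall>A. A \<subseteq> cov_V G emb S \<and> finite A \<and> A \<noteq> {} \<and> card A \<le> N
              \<and> (\<forall>x\<in>A. \<forall>y\<in>A. x \<noteq> y \<longrightarrow> gaif_adj (cov_S G emb S) x y)
              \<longrightarrow> (\<exists>h\<in>cov_S G emb S. A \<subseteq> h))"
  proof (intro impI conjI allI)
    assume h: "3 \<le> N \<and> N_acyclic G emb S N"
    fix c assume "chordless_cycle (cov_V G emb S) (cov_S G emb S) c \<and> 4 \<le> length c \<and> length c \<le> N"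
    thus False using no_chordless[of N c] h by blast
  next
    assume h: "3 \<le> N \<and> N_acyclic G emb S N"
    fix A assume "A \<subseteq> cov_V G emb S \<and> finite A \<and> A \<noteq> {} \<and> card A \<le> N
              \<and> (\<forall>x\<in>A. \<forall>y\<in>A. x \<noteq> y \<longrightarrow> gaif_adj (cov_S G emb S) x y)"
    thus "\<exists>h\<in>cov_S G emb S. A \<subseteq> h" using cliques[of N A] h by blast
  qed
  show ?thesis by (rule conjI[OF P1 conjI[OF P2 P3]])
qed


end
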